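(* Let $\mathbb{K}$ be a field and $f=a_0(x)+a_1(x)y+\cdots+a_n(x)y^n\in\mathbb{K}[x,y]$ with $n\geq 2$, $a_1,\ldots,a_{n-1}\in\mathbb{K}[x]$, $a_0,a_n\in\mathbb{K}$, $a_0a_n\neq 0$, and suppose there exists an index $j$ with $1\leq j\leq n-1$ such that $\deg a_j>\max_{i\neq j}\deg a_i$. Then $f$ is a product of at most $\min\{j,n-j\}$ irreducible polynomials over $\mathbb{K}[x]$. In particular, if $j=1$ or $j=n-1$, then $f$ is irreducible over $\mathbb{K}[x]$.
   Context: $f$ is regarded as a polynomial in $y$ with coefficients in $\mathbb{K}[x]$; "a product of at most $k$ irreducible polynomials over $\mathbb{K}[x]$" means that in the factorization of $f$ into irreducible elements of $\mathbb{K}[x][y]$ the number of factors, counted with multiplicities, is at most $k$. *)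

theory Defs
  imports "HOL-Computational_Algebra.Computational_Algebra"
begin

end

theory Submission
  imports Defs
begin

definition hx :: "nat \<Rightarrow> 'a::comm_ring_1 poly \<Rightarrow> 'a poly" where
  "hx N b = pcompose b (monom 1 N)"

definition phi :: "nat \<Rightarrow> 'a::comm_ring_1 poly poly \<Rightarrow> 'a poly" where
  "phi N g = poly (map_poly (hx N) g) [:0,1:]"

lemma coeff_hx:
  assumes "0 < N"
  shows "coeff (hx N b) s = (if N dvd s then coeff b (s div N) else 0)"
  unfolding hx_def
proof (induction b arbitrary: s)
  case 0
  then show ?case by simp
next
  case (pCons a p)
  have e: "coeff (pcompose (pCons a p) (monom 1 N)) s
      = coeff [:a:] s + (if s < N then 0 else coeff (pcompose p (monom 1 N)) (s - N))"
    by (simp add: pcompose_pCons coeff_monom_mult)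
  show ?case
  proof (cases "s = 0")
    case True
    then show ?thesis using e assms by simp
  next
    case False
    show ?thesis
    proof (cases "s < N")
      case True
      then have "\<not> N dvd s" using False by (auto dest: dvd_imp_le)
      then show ?thesis using e True False by (simp add: coeff_pCons split: nat.split)
    next
      case nl: False
      have d: "N dvd (s - N) \<longleftrightarrow> N dvd s" using nl
        by (metis dvd_minus_self le_add_diff_inverse2 not_le dvd_add_right_iff add.commute)
      have q: "(s - N) div N = s div N - 1" using nl assms
        by (simp add: le_div_geq not_less)
      have "s div N \<ge> 1" using nl assms by (simp add: le_div_geq not_less)
      then have "coeff (pCons a p) (s div N) = coeff p (s div N - 1)"
        by (cases "s div N") auto
      then show ?thesis using e nl False pCons.IH[of "s - N"] d q by (simp add: coeff_pCons split: nat.split)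
    qed
  qed
qed

lemma map_hx_mult: "map_poly (hx N) (p * q) = map_poly (hx N) p * map_poly (hx N) q"
proof (rule poly_eqI)
  fix n
  have h0: "hx N 0 = 0" by (simp add: hx_def)
  show "coeff (map_poly (hx N) (p * q)) n = coeff (map_poly (hx N) p * map_poly (hx N) q) n"
    by (simp add: coeff_map_poly h0 coeff_mult hx_def pcompose_sum pcompose_mult)
qed

lemma phi_mult: "phi N (p * q) = phi N p * phi N q"
  by (simp add: phi_def map_hx_mult)

lemma phi_1: "phi N 1 = 1"
  by (simp add: phi_def hx_def pcompose_1)

lemma poly_sum_bound:
  fixes x :: "'a::{comm_semiring_0,semiring_1}"
  assumes "degree p < K"
  shows "poly p x = (\<Sum>i<K. coeff p i * x ^ i)"
proof -
  have "poly p x = (\<Sum>i\<le>degree p. coeff p i * x ^ i)" by (rule poly_altdef)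
  also have "\<dots> = (\<Sum>i<K. coeff p i * x ^ i)"
    by (rule sum.mono_neutral_left) (use assms in \<open>auto simp: coeff_eq_0\<close>)
  finally show ?thesis .
qed

lemma coeff_phi:
  assumes "degree g < N"
  shows "coeff (phi N g) t = coeff (coeff g (t mod N)) (t div N)"
proof -
  have N: "0 < N" using assms by simp
  have h0: "hx N 0 = 0" by (simp add: hx_def)
  have dm: "degree (map_poly (hx N) g) < N"
    using map_poly_degree_leq[of "hx N" g] assms by simp
  have "phi N g = (\<Sum>i<N. monom 1 i * hx N (coeff g i))"
    unfolding phi_def using poly_sum_bound[OF dm]
    by (simp add: coeff_map_poly h0 monom_altdef mult.commute)
  then have "coeff (phi N g) t = (\<Sum>i<N. coeff (monom 1 i * hx N (coeff g i)) t)"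
    by (simp add: coeff_sum)
  also have "\<dots> = (\<Sum>i<N. if i = t mod N then coeff (coeff g (t mod N)) (t div N) else 0)"
  proof (rule sum.cong)
    fix i assume i: "i \<in> {..<N}"
    show "coeff (monom 1 i * hx N (coeff g i)) t
        = (if i = t mod N then coeff (coeff g (t mod N)) (t div N) else 0)"
    proof (cases "i = t mod N")
      case True
      have "\<not> t < i" using True by (simp add: not_less)
      moreover have "N dvd (t - i)" using True by (simp add: minus_mod_eq_mult_div)
      moreover have "(t - i) div N = t div N" using True N
        by (simp add: minus_mod_eq_mult_div)
      moreover have "coeff (monom 1 i * hx N (coeff g i)) t = coeff (hx N (coeff g i)) (t - i)"
        using \<open>\<not> t < i\<close> by (simp add: coeff_monom_mult)
      ultimately show ?thesis using True by (simp add: coeff_hx N)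
    next
      case False
      have "\<not> (i \<le> t \<and> N dvd (t - i))"
      proof
        assume a: "i \<le> t \<and> N dvd (t - i)"
        then obtain k where k: "t - i = N * k" by blast
        then have "t = N * k + i" using a by simp
        then have "t mod N = i" using i by simp
        then show False using False by simp
      qed
      then show ?thesis using False by (auto simp: coeff_monom_mult coeff_hx N)
    qed
  qed simp
  also have "\<dots> = coeff (coeff g (t mod N)) (t div N)"
    using N by (simp add: sum.delta)
  finally show ?thesis .
qed

lemma good_phi:
  fixes p :: "'a::field poly poly"
  assumes "degree p < N" "1 \<le> degree p" "degree (lead_coeff p) = 0" "degree (coeff p 0) = 0"
  shows "1 \<le> degree (phi N p) mod N \<and> degree (phi N p) mod N \<le> degree p \<and> phi N p \<noteq> 0"
proof -
  define D where "D = degree (phi N p)"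
  have p0: "p \<noteq> 0" using assms(2) by auto
  have "coeff (phi N p) (degree p) = coeff (lead_coeff p) 0"
    using coeff_phi[OF assms(1)] assms(1) by simp
  also have "\<dots> \<noteq> 0" using assms(3) p0
    by (metis leading_coeff_0_iff)
  finally have c: "coeff (phi N p) (degree p) \<noteq> 0" .
  then have nz: "phi N p \<noteq> 0" by auto
  have Dge: "degree p \<le> D" unfolding D_def using c by (rule le_degree)
  have "coeff (phi N p) D \<noteq> 0" unfolding D_def using nz by simp
  then have cD: "coeff (coeff p (D mod N)) (D div N) \<noteq> 0"
    using coeff_phi[OF assms(1), of D] by simp
  have le: "D mod N \<le> degree p"
  proof (rule ccontr)
    assume "\<not> D mod N \<le> degree p"
    then have "coeff p (D mod N) = 0" by (simp add: coeff_eq_0)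
    then show False using cD by simp
  qed
  have ge: "1 \<le> D mod N"
  proof (rule ccontr)
    assume "\<not> 1 \<le> D mod N"
    then have m0: "D mod N = 0" by simp
    then have "coeff (coeff p 0) (D div N) \<noteq> 0" using cD by simp
    then have "D div N \<le> degree (coeff p 0)" by (rule le_degree)
    then have d0: "D div N = 0" using assms(4) by simp
    have "D = N * (D div N) + D mod N" by simp
    then have "D = 0" using m0 d0 by simp
    then show False using Dge assms(2) by simp
  qed
  show ?thesis using le ge nz unfolding D_def by simp
qed


lemma dominant_phi:
  fixes F :: "'a::field poly poly"
  assumes N: "degree F < N" and j: "j \<le> degree F" and cj: "coeff F j \<noteq> 0"
    and dom: "\<forall>i\<le>degree F. i \<noteq> j \<longrightarrow> degree (coeff F i) < degree (coeff F j)"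
  shows "degree (phi N F) = N * degree (coeff F j) + j"
proof -
  define d where "d = degree (coeff F j)"
  have jN: "j < N" using j N by simp
  have dle: "degree (coeff F i) \<le> d" for i
  proof (cases "i \<le> degree F")
    case True then show ?thesis using dom unfolding d_def by (cases "i = j") auto
  next
    case False then show ?thesis by (simp add: coeff_eq_0)
  qed
  have c0: "coeff (phi N F) (N * d + j) \<noteq> 0"
    using coeff_phi[OF N, of "N * d + j"] jN cj unfolding d_def by simp
  have "coeff (phi N F) t = 0" if t: "t > N * d + j" for t
  proof -
    define q where "q = t div N"
    define i where "i = t mod N"
    have tq: "t = N * q + i" unfolding q_def i_def by simp
    have iN: "i < N" unfolding i_def using jN by simp
    have qd: "q \<ge> d"
    proof (rule ccontr)
      assume "\<not> d \<le> q"
      then have "q + 1 \<le> d" by simp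
      then have "N * (q + 1) \<le> N * d" by (rule mult_le_mono2)
      then show False using t tq iN by simp
    qed
    have "coeff (coeff F i) q = 0"
    proof (cases "q > d")
      case True then show ?thesis using dle[of i] by (simp add: coeff_eq_0)
    next
      case False
      then have "q = d" using qd by simp
      then have "i > j" using t tq by simp
      then show ?thesis
      proof (cases "i \<le> degree F")
        case True
        then have "degree (coeff F i) < q" using dom \<open>i > j\<close> \<open>q = d\<close> unfolding d_def by auto
        then show ?thesis by (simp add: coeff_eq_0)
      next
        case False then show ?thesis by (simp add: coeff_eq_0)
      qed
    qed
    then show ?thesis using coeff_phi[OF N, of t] unfolding q_def i_def by simp
  qed
  then have "degree (phi N F) \<le> N * d + j" by (intro degree_le) auto
  moreover have "N * d + j \<le> degree (phi N F)" using c0 by (rule le_degree)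
  ultimately show ?thesis unfolding d_def by simp
qed

lemma count_phi:
  fixes P :: "'a::field poly poly multiset"
  assumes "\<forall>p\<in>#P. 1 \<le> degree (phi N p) mod N \<and> degree (phi N p) mod N \<le> degree p \<and> p \<noteq> 0"
    and "degree (prod_mset P) < N"
  shows "size P \<le> degree (phi N (prod_mset P)) mod N
         \<and> degree (phi N (prod_mset P)) mod N \<le> degree (prod_mset P) \<and> phi N (prod_mset P) \<noteq> 0"
  using assms
proof (induction P)
  case empty
  then show ?case by (simp add: phi_1)
next
  case (add p P)
  have hp: "1 \<le> degree (phi N p) mod N" "degree (phi N p) mod N \<le> degree p" "p \<noteq> 0"
    using add.prems by auto
  have hP: "\<forall>p\<in>#P. 1 \<le> degree (phi N p) mod N \<and> degree (phi N p) mod N \<le> degree p \<and> p \<noteq> 0"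
    using add.prems by auto
  have P0: "prod_mset P \<noteq> 0" using hP by (auto simp: prod_mset_zero_iff)
  have dg: "degree (prod_mset (add_mset p P)) = degree p + degree (prod_mset P)"
    using hp(3) P0 by (simp add: degree_mult_eq)
  then have dP: "degree (prod_mset P) < N" using add.prems by simp
  from add.IH[OF hP dP] have IH: "size P \<le> degree (phi N (prod_mset P)) mod N"
    "degree (phi N (prod_mset P)) mod N \<le> degree (prod_mset P)" "phi N (prod_mset P) \<noteq> 0"
    by auto
  have pp0: "phi N p \<noteq> 0" using hp(1) by auto
  have e: "phi N (prod_mset (add_mset p P)) = phi N p * phi N (prod_mset P)"
    by (simp add: phi_mult)
  have de: "degree (phi N (prod_mset (add_mset p P))) = degree (phi N p) + degree (phi N (prod_mset P))"
    unfolding e using pp0 IH(3) by (simp add: degree_mult_eq)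
  define a where "a = degree (phi N p)"
  define b where "b = degree (phi N (prod_mset P))"
  have lt: "a mod N + b mod N < N" using hp(2) IH(2) dg add.prems(2) unfolding a_def b_def by simp
  have "(a + b) mod N = (a mod N + b mod N) mod N" by (simp add: mod_add_eq)
  also have "\<dots> = a mod N + b mod N" using lt by simp
  finally have m: "(a + b) mod N = a mod N + b mod N" .
  show ?case
    using de m hp IH dg pp0 e unfolding a_def b_def by simp
qed


lemma divisor_good:
  fixes f p :: "'a::field poly poly"
  assumes "p dvd f" "\<not> p dvd 1" "degree (coeff f 0) = 0" "coeff f 0 \<noteq> 0"
    "degree (lead_coeff f) = 0"
  shows "p \<noteq> 0 \<and> 1 \<le> degree p \<and> degree (lead_coeff p) = 0 \<and> degree (coeff p 0) = 0 \<and> coeff p 0 \<noteq> 0"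
proof -
  obtain q where fq: "f = p * q" using assms(1) by blast
  have f0: "f \<noteq> 0" using assms(4) by auto
  then have p0: "p \<noteq> 0" and q0: "q \<noteq> 0" using fq by auto
  have c0: "coeff f 0 = coeff p 0 * coeff q 0" using fq by (simp add: coeff_mult_0)
  then have cp0: "coeff p 0 \<noteq> 0" and cq0: "coeff q 0 \<noteq> 0" using assms(4) by auto
  have "degree (coeff p 0) + degree (coeff q 0) = 0"
    using c0 assms(3) cp0 cq0 by (simp add: degree_mult_eq)
  then have dp0: "degree (coeff p 0) = 0" by simp
  have l: "lead_coeff f = lead_coeff p * lead_coeff q" using fq by (simp add: lead_coeff_mult)
  have "degree (lead_coeff p) + degree (lead_coeff q) = 0"
    using l assms(5) p0 q0 by (simp add: degree_mult_eq)
  then have dl: "degree (lead_coeff p) = 0" by simp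
  have "1 \<le> degree p"
  proof (rule ccontr)
    assume "\<not> 1 \<le> degree p"
    then have d0: "degree p = 0" by simp
    have lp0: "lead_coeff p \<noteq> 0" using p0 by simp
    have "is_unit (lead_coeff p)" using is_unit_iff_degree[OF lp0] dl by simp
    moreover have "p = [:lead_coeff p:]" using d0 by (metis degree_0_id)
    ultimately have "is_unit p" by (metis is_unit_poly_iff)
    then show False using assms(2) by simp
  qed
  then show ?thesis using p0 dl dp0 cp0 by simp
qed

lemma reflect_good:
  fixes p :: "'a::field poly poly"
  assumes "p \<noteq> 0 \<and> 1 \<le> degree p \<and> degree (lead_coeff p) = 0 \<and> degree (coeff p 0) = 0 \<and> coeff p 0 \<noteq> 0"
  shows "degree (reflect_poly p) = degree p \<and> 1 \<le> degree (reflect_poly p)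
    \<and> degree (lead_coeff (reflect_poly p)) = 0 \<and> degree (coeff (reflect_poly p) 0) = 0"
proof -
  have d: "degree (reflect_poly p) = degree p" using assms by simp
  have "lead_coeff (reflect_poly p) = coeff p 0" using d by (simp add: coeff_reflect_poly)
  then show ?thesis using assms d by simp
qed

lemma reflect_prod_mset:
  fixes P :: "'a::field poly poly multiset"
  shows "reflect_poly (prod_mset P) = prod_mset (image_mset reflect_poly P)"
  by (induction P) (simp_all add: reflect_poly_mult)

lemma unit_of_deg0:
  fixes p :: "'a::field poly poly"
  assumes p0: "p \<noteq> 0" and d0: "degree p = 0" and dl: "degree (lead_coeff p) = 0"
  shows "is_unit p"
proof -
  have lp0: "lead_coeff p \<noteq> 0" using p0 by simp
  have "is_unit (lead_coeff p)" using is_unit_iff_degree[OF lp0] dl by simp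
  moreover have "p = [:lead_coeff p:]" using d0 by (metis degree_0_id)
  ultimately show "is_unit p" by (metis is_unit_poly_iff)
qed

definition mu :: "'a::field poly poly \<Rightarrow> nat" where
  "mu g = degree g + degree (lead_coeff g)"

lemma mu_mult:
  fixes a b :: "'a::field poly poly"
  assumes "a \<noteq> 0" "b \<noteq> 0"
  shows "mu (a * b) = mu a + mu b"
proof -
  have "lead_coeff (a * b) = lead_coeff a * lead_coeff b" by (rule lead_coeff_mult)
  moreover have "lead_coeff a \<noteq> 0" "lead_coeff b \<noteq> 0" using assms by auto
  ultimately have "degree (lead_coeff (a * b)) = degree (lead_coeff a) + degree (lead_coeff b)"
    by (simp add: degree_mult_eq)
  moreover have "degree (a * b) = degree a + degree b" using assms by (simp add: degree_mult_eq)
  ultimately show ?thesis unfolding mu_def by simp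
qed

lemma factor_exists:
  fixes g :: "'a::field poly poly"
  assumes "g \<noteq> 0"
  shows "\<exists>u P. is_unit u \<and> (\<forall>p\<in>#P. irreducible p) \<and> g = u * prod_mset P"
  using assms
proof (induction "mu g" arbitrary: g rule: less_induct)
  case less
  show ?case
  proof (cases "is_unit g")
    case True
    then show ?thesis by (intro exI[of _ g] exI[of _ "{#}"]) simp
  next
    case nu: False
    show ?thesis
    proof (cases "irreducible g")
      case True
      then show ?thesis by (intro exI[of _ 1] exI[of _ "{#g#}"]) simp
    next
      case False
      then obtain a b where ab: "g = a * b" "\<not> is_unit a" "\<not> is_unit b"
        using less.prems nu by (auto simp: irreducible_def)
      have a0: "a \<noteq> 0" and b0: "b \<noteq> 0" using ab less.prems by auto
      have mua: "mu a \<ge> 1"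
      proof (rule ccontr)
        assume "\<not> 1 \<le> mu a"
        then have "degree a = 0" "degree (lead_coeff a) = 0" by (auto simp: mu_def)
        then show False using unit_of_deg0[OF a0] ab(2) by simp
      qed
      have mub: "mu b \<ge> 1"
      proof (rule ccontr)
        assume "\<not> 1 \<le> mu b"
        then have "degree b = 0" "degree (lead_coeff b) = 0" by (auto simp: mu_def)
        then show False using unit_of_deg0[OF b0] ab(3) by simp
      qed
      have m: "mu g = mu a + mu b" using ab(1) mu_mult[OF a0 b0] by simp
      obtain ua Pa where A: "is_unit ua" "\<forall>p\<in>#Pa. irreducible p" "a = ua * prod_mset Pa"
        using less.hyps[of a] a0 m mub by auto
      obtain ub Pb where B: "is_unit ub" "\<forall>p\<in>#Pb. irreducible p" "b = ub * prod_mset Pb"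
        using less.hyps[of b] b0 m mua by auto
      have "g = (ua * ub) * prod_mset (Pa + Pb)" using ab(1) A(3) B(3) by (simp add: ac_simps)
      moreover have "is_unit (ua * ub)" using mult_dvd_mono[OF A(1) B(1)] by simp
      moreover have "\<forall>p\<in>#Pa + Pb. irreducible p" using A(2) B(2) by auto
      ultimately show ?thesis by blast
    qed
  qed
qed

theorem theorem6:
  fixes f :: "'a::field poly poly" and n j :: nat
  assumes "degree f = n" and "n \<ge> 2"
    and "degree (coeff f 0) = 0" and "degree (coeff f n) = 0"
    and "coeff f 0 * coeff f n \<noteq> 0"
    and "1 \<le> j" and "j \<le> n - 1"
    and "\<forall>i\<le>n. i \<noteq> j \<longrightarrow> degree (coeff f i) < degree (coeff f j)"
  shows "(\<exists>P. (\<forall>p\<in>#P. irreducible p) \<and> prod_mset P = f \<and> size P \<le> min j (n - j))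
         \<and> ((j = 1 \<or> j = n - 1) \<longrightarrow> irreducible f)"
proof -
  note dF = assms(1) and dom = assms(8)
  define N where "N = n + 1"
  have nN: "n < N" unfolding N_def by simp
  have cf0: "coeff f 0 \<noteq> 0" and cfn: "coeff f n \<noteq> 0" using assms(5) by auto
  have f0: "f \<noteq> 0" using cf0 by auto
  have lf: "degree (lead_coeff f) = 0" using assms(4) dF by simp
  have jn: "j < n" using assms(6,7) by simp
  have cfj: "coeff f j \<noteq> 0"
  proof
    assume "coeff f j = 0"
    then show False using dom[rule_format, of 0] assms(6) by simp
  qed
  have key: "size P \<le> j \<and> size P \<le> n - j"
    if P1: "\<forall>p\<in>#P. \<not> p dvd 1" and P2: "prod_mset P = f" for P
  proof -
    have good: "p \<noteq> 0 \<and> 1 \<le> degree p \<and> degree (lead_coeff p) = 0 \<and> degree (coeff p 0) = 0 \<and> coeff p 0 \<noteq> 0"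
      if "p \<in># P" for p
    proof -
      have "p dvd f" using that P2 dvd_prod_mset by blast
      then show ?thesis using divisor_good[of p f] P1 that assms(3) cf0 lf by blast
    qed
    have degp: "degree p < N" if "p \<in># P" for p
    proof -
      have "p dvd f" using that P2 dvd_prod_mset by blast
      then have "degree p \<le> degree f" using f0 by (rule dvd_imp_degree_le)
      then show ?thesis using nN dF by simp
    qed
    have c1: "size P \<le> degree (phi N (prod_mset P)) mod N"
    proof -
      have "\<forall>p\<in>#P. 1 \<le> degree (phi N p) mod N \<and> degree (phi N p) mod N \<le> degree p \<and> p \<noteq> 0"
        using good degp good_phi by blast
      then show ?thesis using count_phi[of P N] P2 dF nN by simp
    qed
    have "degree (phi N f) = N * degree (coeff f j) + j"
      by (rule dominant_phi) (use dF nN jn cfj dom in auto)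
    then have "degree (phi N f) mod N = j" using jn nN by simp
    then have s1: "size P \<le> j" using c1 P2 by simp
    define Q where "Q = image_mset reflect_poly P"
    have Q2: "prod_mset Q = reflect_poly f" unfolding Q_def using P2 reflect_prod_mset[of P] by simp
    have dR: "degree (reflect_poly f) = n" using cf0 dF by simp
    have c2: "size Q \<le> degree (phi N (prod_mset Q)) mod N"
    proof -
      have "\<forall>q\<in>#Q. 1 \<le> degree (phi N q) mod N \<and> degree (phi N q) mod N \<le> degree q \<and> q \<noteq> 0"
      proof
        fix q assume "q \<in># Q"
        then obtain p where p: "p \<in># P" "q = reflect_poly p" unfolding Q_def by auto
        have r: "degree q = degree p \<and> 1 \<le> degree q \<and> degree (lead_coeff q) = 0 \<and> degree (coeff q 0) = 0"
          using reflect_good[OF good[OF p(1)]] p(2) by metis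
        then have "degree q < N" using degp[OF p(1)] by simp
        then show "1 \<le> degree (phi N q) mod N \<and> degree (phi N q) mod N \<le> degree q \<and> q \<noteq> 0"
          using good_phi[of q N] r by (metis degree_0 not_one_le_zero)
      qed
      then show ?thesis using count_phi[of Q N] Q2 dR nN by simp
    qed
    have crf: "coeff (reflect_poly f) i = coeff f (n - i)" if "i \<le> n" for i
      using that dF by (simp add: coeff_reflect_poly)
    have "degree (phi N (reflect_poly f)) = N * degree (coeff (reflect_poly f) (n - j)) + (n - j)"
    proof (rule dominant_phi)
      show "degree (reflect_poly f) < N" using dR nN by simp
      show "n - j \<le> degree (reflect_poly f)" using dR by simp
      show "coeff (reflect_poly f) (n - j) \<noteq> 0" using crf[of "n - j"] jn cfj by simp
      show "\<forall>i\<le>degree (reflect_poly f). i \<noteq> n - j \<longrightarrow>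
          degree (coeff (reflect_poly f) i) < degree (coeff (reflect_poly f) (n - j))"
      proof (intro allI impI)
        fix i assume i: "i \<le> degree (reflect_poly f)" "i \<noteq> n - j"
        then have "n - i \<noteq> j" "n - i \<le> n" using dR jn by auto
        then show "degree (coeff (reflect_poly f) i) < degree (coeff (reflect_poly f) (n - j))"
          using crf[of i] crf[of "n - j"] i dR jn dom by simp
      qed
    qed
    moreover obtain m where m: "m = n - j" "m < N" using jn nN by simp
    ultimately have "degree (phi N (reflect_poly f)) mod N = m" by simp
    then have "degree (phi N (reflect_poly f)) mod N = n - j" using m by simp
    then have "size Q \<le> n - j" using c2 Q2 by simp
    then show ?thesis using s1 unfolding Q_def by simp
  qed
  have nu: "\<not> is_unit f"
  proof
    assume "is_unit f"
    then obtain c where "f = [:c:]" using is_unit_poly_iff by blast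
    then show False using dF assms(2) by simp
  qed
  have ex: "\<exists>P. (\<forall>p\<in>#P. irreducible p) \<and> prod_mset P = f"
  proof -
    obtain u A where u: "is_unit u" and A: "\<forall>p\<in>#A. irreducible p" and fu: "f = u * prod_mset A"
      using factor_exists[OF f0] by blast
    have "A \<noteq> {#}"
    proof
      assume "A = {#}"
      then have "is_unit f" using u fu by simp
      then show False using nu by simp
    qed
    then obtain p where p: "p \<in># A" by blast
    define P where "P = add_mset (u * p) (A - {#p#})"
    have "prod_mset P = u * (p * prod_mset (A - {#p#}))" unfolding P_def by (simp add: mult.assoc)
    also have "p * prod_mset (A - {#p#}) = prod_mset A" using p by (simp add: prod_mset.remove)
    finally have pf: "prod_mset P = f" using fu by simp
    have "irreducible (u * p)"
      using irreducible_mult_unit_left[OF u] A p by blast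
    moreover have "\<forall>q\<in>#A - {#p#}. irreducible q"
      using A by (metis in_diffD)
    ultimately have "\<forall>q\<in>#P. irreducible q" unfolding P_def by auto
    then show ?thesis using pf by blast
  qed
  then obtain P where P: "\<forall>p\<in>#P. irreducible p" "prod_mset P = f" by blast
  have "\<forall>p\<in>#P. \<not> p dvd 1" using P(1) by (auto simp: irreducible_def)
  then have "size P \<le> min j (n - j)" using key P(2) by simp
  then have part1: "\<exists>P. (\<forall>p\<in>#P. irreducible p) \<and> prod_mset P = f \<and> size P \<le> min j (n - j)"
    using P by blast
  have part2: "irreducible f" if "j = 1 \<or> j = n - 1"
  proof (rule irreducibleI)
    show "f \<noteq> 0" by (rule f0)
    show "\<not> f dvd 1" using nu .
    fix a b assume ab: "f = a * b"
    show "a dvd 1 \<or> b dvd 1"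
    proof (rule ccontr)
      assume "\<not> (a dvd 1 \<or> b dvd 1)"
      then have "\<forall>p\<in>#{#a, b#}. \<not> p dvd 1" by simp
      moreover have "prod_mset {#a, b#} = f" using ab by simp
      ultimately have "size {#a, b#} \<le> j \<and> size {#a, b#} \<le> n - j" using key by blast
      then show False using that jn by auto
    qed
  qed
  show ?thesis using part1 part2 by blast
qed

end
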